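(* Let $b_1,\dots,b_m$ be background frames and $f$ a foreground frame, with a distance $d$ satisfying the triangle inequality and $d(b_j,b_{j+1})\le\delta$ for all $1\le j<m$. Suppose $b_i$ is a strong match for $f$, with $d(f,b_i)$ uniformly distributed on $[0,\Psi]$, and let $\gamma\ge0$ be an integer with $1\le i-\gamma$ and $i+\gamma\le m$. Then the expected number of strong matches for $f$ among $b_{i-\gamma},\dots,b_{i+\gamma}$ is at least $2(\gamma+1)\left(1-\frac{\delta\gamma}{2\Psi}\right)-1$.
   Context: A background frame $b$ is a strong match for a foreground frame $f$ if $d(f,b)\le\Psi$, where $\Psi>0$ is a fixed threshold. Randomized model: given that $\{f,b\}$ is a strong match, the distance $d(f,b)$ is modeled as a sample from the uniform distribution on $[0,\Psi]$. *)

theory Defs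
  imports "HOL-Probability.Probability"
begin

definition strong_match :: "('a \<Rightarrow> 'a \<Rightarrow> real) \<Rightarrow> real \<Rightarrow> 'a \<Rightarrow> 'a \<Rightarrow> bool" where
  "strong_match d \<Psi> f b \<longleftrightarrow> d f b \<le> \<Psi>"

definition num_strong_matches ::
  "('a \<Rightarrow> 'a \<Rightarrow> real) \<Rightarrow> real \<Rightarrow> 'a \<Rightarrow> (nat \<Rightarrow> 'a) \<Rightarrow> nat set \<Rightarrow> nat" where
  "num_strong_matches d \<Psi> f b J = card {j \<in> J. strong_match d \<Psi> f (b j)}"

end

theory Submission
  imports Defs
begin

lemma sum_absdist:
  fixes i :: nat
  shows "\<gamma> \<le> i \<Longrightarrow> (\<Sum>j\<in>{i-\<gamma>..i+\<gamma>}. real (if j \<le> i then i - j else j - i)) = real \<gamma> * (real \<gamma> + 1)"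
proof (induction \<gamma>)
  case 0
  then show ?case by simp
next
  case (Suc g)
  have e: "{i - Suc g..i + Suc g} = insert (i - Suc g) (insert (i + Suc g) {i-g..i+g})"
    using Suc.prems by auto
  have "(\<Sum>j\<in>{i - Suc g..i + Suc g}. real (if j \<le> i then i - j else j - i))
      = real (Suc g) + real (Suc g) + (\<Sum>j\<in>{i-g..i+g}. real (if j \<le> i then i - j else j - i))"
    unfolding e using Suc.prems by (subst sum.insert; auto)+
  also have "\<dots> = real (Suc g) * (real (Suc g) + 1)" using Suc by (simp add: algebra_simps)
  finally show ?case .
qed

theorem lemma3p5:
  fixes M :: "'w measure"
    and d :: "'a \<Rightarrow> 'a \<Rightarrow> real"
    and f :: "'w \<Rightarrow> 'a" and b :: "'w \<Rightarrow> nat \<Rightarrow> 'a"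
    and \<Psi> \<delta> :: real and m i \<gamma> :: nat
  assumes "prob_space M"
    and "\<Psi> > 0"
    and sym: "\<And>x y. d x y = d y x"
    and tri: "\<And>x y z. d x z \<le> d x y + d y z"
    and step: "\<And>\<omega> j. \<omega> \<in> space M \<Longrightarrow> 1 \<le> j \<Longrightarrow> j < m \<Longrightarrow> d (b \<omega> j) (b \<omega> (j + 1)) \<le> \<delta>"
    and strong: "\<And>\<omega>. \<omega> \<in> space M \<Longrightarrow> strong_match d \<Psi> (f \<omega>) (b \<omega> i)"
    and meas: "\<And>j. (\<lambda>\<omega>. d (f \<omega>) (b \<omega> j)) \<in> borel_measurable M"
    and unif: "distr M lborel (\<lambda>\<omega>. d (f \<omega>) (b \<omega> i)) = uniform_measure lborel {0..\<Psi>}"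
    and h1: "1 \<le> i - \<gamma>" and h2: "\<gamma> \<le> i"
    and h3: "i + \<gamma> \<le> m"
  shows "prob_space.expectation M
           (\<lambda>\<omega>. real (num_strong_matches d \<Psi> (f \<omega>) (b \<omega>) {i - \<gamma>..i + \<gamma>}))
         \<ge> 2 * (real \<gamma> + 1) * (1 - \<delta> * real \<gamma> / (2 * \<Psi>)) - 1"
proof -
  interpret P: prob_space M by fact
  define X where "X = (\<lambda>\<omega>. d (f \<omega>) (b \<omega> i))"
  define J where "J = {i - \<gamma>..i + \<gamma>}"
  define dd where "dd = (\<lambda>j::nat. if j \<le> i then i - j else j - i)"
  define A where "A = (\<lambda>j. {\<omega> \<in> space M. d (f \<omega>) (b \<omega> j) \<le> \<Psi>})"
  have dpos: "d x y \<ge> 0" for x y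
  proof -
    have "d y y \<ge> 0" using tri[where x=x and y=y and z=y] by linarith
    moreover have "d y y \<le> 2 * d x y" using tri[where x=y and y=x and z=y] sym[of y x] by linarith
    ultimately show ?thesis by simp
  qed
  have i1: "1 \<le> i" using h1 by simp
  have up: "\<And>k. \<omega> \<in> space M \<Longrightarrow> i + k \<le> m \<Longrightarrow> d (f \<omega>) (b \<omega> (i+k)) \<le> X \<omega> + real k * \<delta>" for \<omega>
  proof -
    fix k assume w: "\<omega> \<in> space M"
    show "i + k \<le> m \<Longrightarrow> d (f \<omega>) (b \<omega> (i+k)) \<le> X \<omega> + real k * \<delta>"
    proof (induction k)
      case 0 then show ?case by (simp add: X_def)
    next
      case (Suc k)
      have "d (f \<omega>) (b \<omega> (i+k+1)) \<le> d (f \<omega>) (b \<omega> (i+k)) + d (b \<omega> (i+k)) (b \<omega> (i+k+1))"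
        by (rule tri)
      moreover have "d (b \<omega> (i+k)) (b \<omega> (i+k+1)) \<le> \<delta>" using step[OF w] i1 Suc.prems by simp
      ultimately show ?case using Suc by (simp add: algebra_simps)
    qed
  qed
  have down: "\<And>k. \<omega> \<in> space M \<Longrightarrow> k < i \<Longrightarrow> i \<le> m \<Longrightarrow> d (f \<omega>) (b \<omega> (i-k)) \<le> X \<omega> + real k * \<delta>" for \<omega>
  proof -
    fix k assume w: "\<omega> \<in> space M"
    show "k < i \<Longrightarrow> i \<le> m \<Longrightarrow> d (f \<omega>) (b \<omega> (i-k)) \<le> X \<omega> + real k * \<delta>"
    proof (induction k)
      case 0 then show ?case by (simp add: X_def)
    next
      case (Suc k)
      have "d (f \<omega>) (b \<omega> (i-Suc k)) \<le> d (f \<omega>) (b \<omega> (i-k)) + d (b \<omega> (i-k)) (b \<omega> (i - Suc k))"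
        by (rule tri)
      moreover have "d (b \<omega> (i-k)) (b \<omega> (i - Suc k)) = d (b \<omega> (i - Suc k)) (b \<omega> (i - Suc k + 1))"
      proof -
        have "i - Suc k + 1 = i - k" using Suc.prems by linarith
        then show ?thesis using sym by simp
      qed
      moreover have "d (b \<omega> (i - Suc k)) (b \<omega> (i - Suc k + 1)) \<le> \<delta>"
        using step[OF w] Suc.prems by simp
      ultimately show ?case using Suc by (simp add: algebra_simps)
    qed
  qed
  have sw: "space M \<noteq> {}" using P.not_empty .
  have deltapos: "\<gamma> \<ge> 1 \<Longrightarrow> \<delta> \<ge> 0"
  proof -
    assume "\<gamma> \<ge> 1"
    obtain \<omega> where w: "\<omega> \<in> space M" using sw by blast
    have "d (b \<omega> (i-\<gamma>)) (b \<omega> (i-\<gamma>+1)) \<le> \<delta>" using step[OF w] h1 h3 \<open>\<gamma> \<ge> 1\<close> by simp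
    then show ?thesis using dpos order_trans by blast
  qed
  have Xm: "X \<in> M \<rightarrow>\<^sub>M lborel" using meas[of i] unfolding X_def by simp
  have cdf: "P.prob {\<omega> \<in> space M. X \<omega> \<le> t} \<ge> min 1 (t / \<Psi>)" for t
  proof -
    have "P.prob {\<omega> \<in> space M. X \<omega> \<le> t} = measure (distr M lborel X) {..t}"
      using Xm by (subst measure_distr) (auto simp: vimage_def Int_def conj_commute)
    also have "\<dots> = measure lborel ({0..\<Psi>} \<inter> {..t}) / measure lborel {0..\<Psi>}"
      unfolding X_def unif using assms(2) by (subst measure_uniform_measure) auto
    also have "\<dots> \<ge> min 1 (t / \<Psi>)"
    proof (cases "t < 0")
      case True then show ?thesis using assms(2) by (auto simp: min_def divide_nonpos_pos)
    next
      case False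
      show ?thesis
      proof (cases "t \<le> \<Psi>")
        case True
        then have "{0..\<Psi>} \<inter> {..t} = {0..t}" by auto
        then show ?thesis using True False assms(2) by (simp add: min_def)
      next
        case f2: False
        then have "{0..\<Psi>} \<inter> {..t} = {0..\<Psi>}" by auto
        then show ?thesis using assms(2) by (simp add: min_def)
      qed
    qed
    finally show ?thesis .
  qed
  have Asets: "A j \<in> sets M" for j unfolding A_def using meas[of j] by measurable
  have fin: "finite J" unfolding J_def by simp
  have "P.expectation (\<lambda>\<omega>. real (num_strong_matches d \<Psi> (f \<omega>) (b \<omega>) J))
      = P.expectation (\<lambda>\<omega>. \<Sum>j\<in>J. indicator (A j) \<omega>)"
  proof (rule Bochner_Integration.integral_cong[OF refl])
    fix \<omega> assume w: "\<omega> \<in> space M"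
    have "real (card {j \<in> J. strong_match d \<Psi> (f \<omega>) (b \<omega> j)})
        = (\<Sum>j\<in>J. if strong_match d \<Psi> (f \<omega>) (b \<omega> j) then 1 else 0)"
      using fin by (simp add: sum.If_cases Int_def)
    then show "real (num_strong_matches d \<Psi> (f \<omega>) (b \<omega>) J) = (\<Sum>j\<in>J. indicator (A j) \<omega>)"
      unfolding num_strong_matches_def A_def strong_match_def using w
      by (simp add: indicator_def of_bool_def)
  qed
  also have "\<dots> = (\<Sum>j\<in>J. P.prob (A j))"
    proof (subst Bochner_Integration.integral_sum)
    fix j assume "j \<in> J"
    show "integrable M (\<lambda>\<omega>. indicator (A j) \<omega> :: real)"
      using Asets[of j] P.emeasure_finite[of "A j"] by (intro integrable_real_indicator) (auto simp: less_top[symmetric])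
  next
    show "(\<Sum>j\<in>J. P.expectation (indicator (A j))) = (\<Sum>j\<in>J. P.prob (A j))"
      using Asets by simp
  qed
  also have "\<dots> \<ge> (\<Sum>j\<in>J. 1 - real (dd j) * \<delta> / \<Psi>)"
  proof (rule sum_mono)
    fix j assume j: "j \<in> J"
    have k: "dd j \<le> \<gamma>" using j unfolding J_def dd_def by auto
    have sub: "{\<omega> \<in> space M. X \<omega> \<le> \<Psi> - real (dd j) * \<delta>} \<subseteq> A j"
    proof
      fix \<omega> assume "\<omega> \<in> {\<omega> \<in> space M. X \<omega> \<le> \<Psi> - real (dd j) * \<delta>}"
      then have w: "\<omega> \<in> space M" and x: "X \<omega> \<le> \<Psi> - real (dd j) * \<delta>" by auto
      have "d (f \<omega>) (b \<omega> j) \<le> X \<omega> + real (dd j) * \<delta>"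
      proof (cases "j \<le> i")
        case True
        have e: "dd j = i - j" using True unfolding dd_def by simp
        have lt: "dd j < i" using True k h1 e by linarith
        have "i \<le> m" using h3 by linarith
        then have "d (f \<omega>) (b \<omega> (i - dd j)) \<le> X \<omega> + real (dd j) * \<delta>" by (rule down[OF w lt])
        moreover have "i - dd j = j" using e True by linarith
        ultimately show ?thesis by simp
      next
        case False
        have e: "dd j = j - i" using False unfolding dd_def by simp
        have le: "i + dd j \<le> m" using j h3 e unfolding J_def by auto
        have "d (f \<omega>) (b \<omega> (i + dd j)) \<le> X \<omega> + real (dd j) * \<delta>" by (rule up[OF w le])
        moreover have "i + dd j = j" using e False by linarith
        ultimately show ?thesis by simp
      qed
      then show "\<omega> \<in> A j" using w x unfolding A_def by simp
    qed
    have "P.prob (A j) \<ge> P.prob {\<omega> \<in> space M. X \<omega> \<le> \<Psi> - real (dd j) * \<delta>}"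
      by (rule P.finite_measure_mono[OF sub Asets])
    moreover have "min 1 ((\<Psi> - real (dd j) * \<delta>) / \<Psi>) = 1 - real (dd j) * \<delta> / \<Psi>"
    proof (cases "dd j = 0")
      case True then show ?thesis using assms(2) by simp
    next
      case False
      then have "\<delta> \<ge> 0" using deltapos k by simp
      then have "real (dd j) * \<delta> / \<Psi> \<ge> 0" using assms(2) by simp
      moreover have "(\<Psi> - real (dd j) * \<delta>) / \<Psi> = 1 - real (dd j) * \<delta> / \<Psi>"
        using assms(2) by (simp add: diff_divide_distrib)
      ultimately show ?thesis by (simp add: min_def)
    qed
    ultimately show "1 - real (dd j) * \<delta> / \<Psi> \<le> P.prob (A j)" using cdf[of "\<Psi> - real (dd j) * \<delta>"] by linarith
  qed
  finally have main: "P.expectation (\<lambda>\<omega>. real (num_strong_matches d \<Psi> (f \<omega>) (b \<omega>) J))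
      \<ge> (\<Sum>j\<in>J. 1 - real (dd j) * \<delta> / \<Psi>)" .
  have "(\<Sum>j\<in>J. 1 - real (dd j) * \<delta> / \<Psi>) = real (card J) - (\<Sum>j\<in>J. real (dd j)) * \<delta> / \<Psi>"
    by (simp add: sum_subtractf sum_divide_distrib[symmetric] sum_distrib_right)
  also have "(\<Sum>j\<in>J. real (dd j)) = real \<gamma> * (real \<gamma> + 1)"
    unfolding J_def dd_def using sum_absdist h2 by simp
  also have "card J = 2 * \<gamma> + 1" unfolding J_def using h2 by simp
  finally have "(\<Sum>j\<in>J. 1 - real (dd j) * \<delta> / \<Psi>) = 2 * (real \<gamma> + 1) * (1 - \<delta> * real \<gamma> / (2 * \<Psi>)) - 1"
    using assms(2) by (simp add: field_simps)
  then show ?thesis using main unfolding J_def by simp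
qed

end
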